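(* Consider on $M_h$ with $2h=1$ the reduced $23$-spherical integrable system $(\ell_{34},G_{23})$, where $G_{23}=\ell_{12}^2+\ell_{13}^2+\ell_{14}^2$. The image of the momentum map $(\ell_{34},G_{23}):M_h\to\mathbb R^2$ has critical values $\mathfrak C_1: G_{23}=1-\ell_{34}^2$ and $\mathfrak C_2: G_{23}=0$, which are both codimension one elliptic.
   Context: $\mathbf L=(\ell_{12},\ell_{13},\ell_{14},\ell_{23},\ell_{24},\ell_{34})\in\mathbb R^6\cong\mathfrak{so}(4)^*$ with the Lie–Poisson bracket of $\mathfrak{so}(4)$ (extending $\ell_{ji}=-\ell_{ij}$: $\{\ell_{ij},\ell_{jk}\}=-\ell_{ik}$ for distinct $i,j,k$, and $\{\ell_{ij},\ell_{kl}\}=0$ when $\{i,j\}\cap\{k,l\}=\emptyset$). $M_h=\{\mathbf L:\sum_{i<j}\ell_{ij}^2=2h,\ \ell_{12}\ell_{34}-\ell_{13}\ell_{24}+\ell_{14}\ell_{23}=0\}\cong S^2\times S^2$ is a symplectic leaf. A codimension one elliptic critical value is one whose critical points have rank-one differential of the momentum map with an elliptic (purely imaginary eigenvalue) transverse linearisation. *)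

theory Defs
  imports "HOL-Analysis.Analysis"
begin

text \<open>Coordinates on so(4)* = real^6: index a of type 6 corresponds to the pair (i,j), i<j,
  in the order 12, 13, 14, 23, 24, 34 (the index 6 is the numeral 0 of type 6).\<close>

definition pr6 :: "6 \<Rightarrow> nat \<times> nat" where
  "pr6 a = (if a = 1 then (1,2) else if a = 2 then (1,3) else if a = 3 then (1,4)
            else if a = 4 then (2,3) else if a = 5 then (2,4) else (3,4))"

definition ell :: "nat \<Rightarrow> nat \<Rightarrow> real^6 \<Rightarrow> real" where
  "ell i j L = (\<Sum>a\<in>UNIV. if pr6 a = (i,j) then L $ a else if pr6 a = (j,i) then - (L $ a) else 0)"

definition kd :: "nat \<Rightarrow> nat \<Rightarrow> real" where
  "kd i j = (if i = j then 1 else 0)"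

text \<open>Lie--Poisson bracket of so(4) on coordinate functions:
  {l_ij, l_kl} = -(d_jk l_il - d_ik l_jl - d_jl l_ik + d_il l_jk);
  this gives {l_ij, l_jk} = - l_ik for distinct i,j,k and 0 for disjoint index pairs.\<close>
definition lp_bracket :: "nat \<Rightarrow> nat \<Rightarrow> nat \<Rightarrow> nat \<Rightarrow> real^6 \<Rightarrow> real" where
  "lp_bracket i j k l L =
     - (kd j k * ell i l L - kd i k * ell j l L - kd j l * ell i k L + kd i l * ell j k L)"

definition poisson_matrix :: "real^6 \<Rightarrow> real^6^6" where
  "poisson_matrix L = (\<chi> a b. lp_bracket (fst (pr6 a)) (snd (pr6 a)) (fst (pr6 b)) (snd (pr6 b)) L)"

definition grad6 :: "(real^6 \<Rightarrow> real) \<Rightarrow> real^6 \<Rightarrow> real^6" where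
  "grad6 f L = (\<chi> a. frechet_derivative f (at L) (axis a 1))"

text \<open>Hamiltonian vector field X_f, with components X_f^a = {x_a, f}.\<close>
definition ham_vf :: "(real^6 \<Rightarrow> real) \<Rightarrow> real^6 \<Rightarrow> real^6" where
  "ham_vf f L = poisson_matrix L *v grad6 f L"

definition casimir1 :: "real^6 \<Rightarrow> real" where
  "casimir1 L = (\<Sum>a\<in>UNIV. (L $ a)^2)"

definition pfaff :: "real^6 \<Rightarrow> real" where
  "pfaff L = ell 1 2 L * ell 3 4 L - ell 1 3 L * ell 2 4 L + ell 1 4 L * ell 2 3 L"

definition Mh :: "real \<Rightarrow> (real^6) set" where
  "Mh h = {L. casimir1 L = 2 * h \<and> pfaff L = 0}"

definition tangent_space :: "real^6 \<Rightarrow> (real^6) set" where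
  "tangent_space L = {v. frechet_derivative casimir1 (at L) v = 0 \<and> frechet_derivative pfaff (at L) v = 0}"

definition dmom_rank :: "(real^6 \<Rightarrow> real) \<Rightarrow> (real^6 \<Rightarrow> real) \<Rightarrow> real^6 \<Rightarrow> nat" where
  "dmom_rank f1 f2 L =
     dim ((\<lambda>v. (frechet_derivative f1 (at L) v, frechet_derivative f2 (at L) v)) ` tangent_space L)"

definition critical_point :: "(real^6 \<Rightarrow> real) \<Rightarrow> (real^6 \<Rightarrow> real) \<Rightarrow> real \<Rightarrow> real^6 \<Rightarrow> bool" where
  "critical_point f1 f2 h L \<longleftrightarrow> L \<in> Mh h \<and> dmom_rank f1 f2 L < 2"

definition critical_values :: "(real^6 \<Rightarrow> real) \<Rightarrow> (real^6 \<Rightarrow> real) \<Rightarrow> real \<Rightarrow> (real \<times> real) set" where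
  "critical_values f1 f2 h = (\<lambda>L. (f1 L, f2 L)) ` {L. critical_point f1 f2 h L}"

text \<open>mu is an eigenvalue of the map induced by the real linear map A on the quotient W/V
  (complexified): there is z = x + i y in W_C, z not in V_C, with A z - mu z in V_C.\<close>
definition trans_eigenvalue :: "(real^6 \<Rightarrow> real^6) \<Rightarrow> (real^6) set \<Rightarrow> (real^6) set \<Rightarrow> complex \<Rightarrow> bool" where
  "trans_eigenvalue A W V \<mu> \<longleftrightarrow>
     (\<exists>x\<in>W. \<exists>y\<in>W. (x \<notin> V \<or> y \<notin> V) \<and>
        A x - (Re \<mu> *\<^sub>R x - Im \<mu> *\<^sub>R y) \<in> V \<and>
        A y - (Im \<mu> *\<^sub>R x + Re \<mu> *\<^sub>R y) \<in> V)"

text \<open>Elliptic transverse linearisation at a rank-one point L: for the combination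
  f = a f1 + b f2 whose differential vanishes on T_L M_h, the linearisation of X_f at L,
  induced on W/V where W = (T_L orbit)^omega = T_L M_h \<inter> ker df1 \<inter> ker df2 and
  V = span {X_f1(L), X_f2(L)} (the orbit direction), has only purely imaginary nonzero eigenvalues.\<close>
definition elliptic_transverse :: "(real^6 \<Rightarrow> real) \<Rightarrow> (real^6 \<Rightarrow> real) \<Rightarrow> real^6 \<Rightarrow> bool" where
  "elliptic_transverse f1 f2 L \<longleftrightarrow>
     (\<exists>a b. (a, b) \<noteq> (0::real, 0::real) \<and>
        (\<forall>v\<in>tangent_space L. a * frechet_derivative f1 (at L) v + b * frechet_derivative f2 (at L) v = 0) \<and>
        (let A = frechet_derivative (ham_vf (\<lambda>M. a * f1 M + b * f2 M)) (at L);
             W = tangent_space L \<inter> {v. frechet_derivative f1 (at L) v = 0 \<and> frechet_derivative f2 (at L) v = 0};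
             V = span {ham_vf f1 L, ham_vf f2 L}
         in (\<exists>\<mu>. trans_eigenvalue A W V \<mu>) \<and>
            (\<forall>\<mu>. trans_eigenvalue A W V \<mu> \<longrightarrow> Re \<mu> = 0 \<and> Im \<mu> \<noteq> 0)))"

definition codim1_elliptic_value :: "(real^6 \<Rightarrow> real) \<Rightarrow> (real^6 \<Rightarrow> real) \<Rightarrow> real \<Rightarrow> real \<times> real \<Rightarrow> bool" where
  "codim1_elliptic_value f1 f2 h c \<longleftrightarrow>
     c \<in> critical_values f1 f2 h \<and>
     (\<forall>L\<in>Mh h. (f1 L, f2 L) = c \<longrightarrow>
         critical_point f1 f2 h L \<and> dmom_rank f1 f2 L = 1 \<and> elliptic_transverse f1 f2 L)"

definition G23 :: "real^6 \<Rightarrow> real" where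
  "G23 L = (ell 1 2 L)^2 + (ell 1 3 L)^2 + (ell 1 4 L)^2"

end

theory Submission
  imports Defs
begin

lemma exhaust_6: fixes x :: 6 shows "x = 0 \<or> x = 1 \<or> x = 2 \<or> x = 3 \<or> x = 4 \<or> x = 5"
proof (induct x)
  case (of_int z)
  then have "z = 0 \<or> z = 1 \<or> z = 2 \<or> z = 3 \<or> z = 4 \<or> z = 5" by fastforce
  then show ?case by auto
qed
lemma UNIV_6: "(UNIV::6 set) = {0,1,2,3,4,5}" using exhaust_6 by auto

lemma sum_6: "sum f (UNIV::6 set) = f 1 + f 2 + f 3 + f 4 + f 5 + f 0"
  unfolding UNIV_6 by (simp add: ac_simps)

lemma ell_simps:
  "ell 1 2 L = L$1" "ell 1 3 L = L$2" "ell 1 4 L = L$3" "ell 2 3 L = L$4" "ell 2 4 L = L$5" "ell 3 4 L = L$0"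
  "ell 2 1 L = - L$1" "ell 3 1 L = - L$2" "ell 4 1 L = - L$3" "ell 3 2 L = - L$4" "ell 4 2 L = - L$5" "ell 4 3 L = - L$0"
  "ell 1 1 L = 0" "ell 2 2 L = 0" "ell 3 3 L = 0" "ell 4 4 L = 0"
  unfolding ell_def sum_6 by (simp_all add: pr6_def)

definition v6 :: "real \<Rightarrow> real \<Rightarrow> real \<Rightarrow> real \<Rightarrow> real \<Rightarrow> real \<Rightarrow> real^6" where
  "v6 a b c d e f = (\<chi> i. if i = 1 then a else if i = 2 then b else if i = 3 then c else if i = 4 then d else if i = 5 then e else f)"

lemma v6_nth[simp]: "v6 a b c d e f $ 1 = a" "v6 a b c d e f $ 2 = b" "v6 a b c d e f $ 3 = c"
  "v6 a b c d e f $ 4 = d" "v6 a b c d e f $ 5 = e" "v6 a b c d e f $ 0 = f"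
  by (simp_all add: v6_def)

lemma vec6_eq_iff: "(x::real^6) = y \<longleftrightarrow> x$1 = y$1 \<and> x$2 = y$2 \<and> x$3 = y$3 \<and> x$4 = y$4 \<and> x$5 = y$5 \<and> x$0 = y$0"
proof
  assume "x$1 = y$1 \<and> x$2 = y$2 \<and> x$3 = y$3 \<and> x$4 = y$4 \<and> x$5 = y$5 \<and> x$0 = y$0"
  then show "x = y" unfolding vec_eq_iff
  proof (intro allI)
    fix i :: 6
    assume h: "x$1 = y$1 \<and> x$2 = y$2 \<and> x$3 = y$3 \<and> x$4 = y$4 \<and> x$5 = y$5 \<and> x$0 = y$0"
    from exhaust_6[of i] h show "x$i = y$i" by (elim disjE) auto
  qed
qed simp

lemma v6_sum: "v6 a b c d e f = a *\<^sub>R axis 1 1 + b *\<^sub>R axis 2 1 + c *\<^sub>R axis 3 1 + d *\<^sub>R axis 4 1 + e *\<^sub>R axis 5 1 + f *\<^sub>R axis 0 1"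
  by (simp add: vec6_eq_iff axis_def)

lemma has_derivative_nth6[derivative_intros]: "((\<lambda>x::real^6. x$i) has_derivative (\<lambda>v. v$i)) F"
  by (rule bounded_linear_imp_has_derivative) (rule bounded_linear_vec_nth)

lemma has_derivative_v6:
  assumes "(f1 has_derivative g1) F" "(f2 has_derivative g2) F" "(f3 has_derivative g3) F"
    "(f4 has_derivative g4) F" "(f5 has_derivative g5) F" "(f6 has_derivative g6) F"
  shows "((\<lambda>x. v6 (f1 x) (f2 x) (f3 x) (f4 x) (f5 x) (f6 x)) has_derivative
          (\<lambda>h. v6 (g1 h) (g2 h) (g3 h) (g4 h) (g5 h) (g6 h))) F"
  unfolding v6_sum by (intro derivative_intros assms)

lemma casimir1_eq: "casimir1 L = (L$1)^2 + (L$2)^2 + (L$3)^2 + (L$4)^2 + (L$5)^2 + (L$0)^2"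
  unfolding casimir1_def sum_6 by simp
lemma pfaff_eq: "pfaff L = L$1 * L$0 - L$2 * L$5 + L$3 * L$4"
  unfolding pfaff_def ell_simps by simp
lemma G23_eq: "G23 L = (L$1)^2 + (L$2)^2 + (L$3)^2"
  unfolding G23_def ell_simps by simp

lemma cas_fun: "casimir1 = (\<lambda>L. (L$1)^2 + (L$2)^2 + (L$3)^2 + (L$4)^2 + (L$5)^2 + (L$0)^2)"
  by (rule ext) (rule casimir1_eq)
lemma fd_C: "frechet_derivative casimir1 (at L) = (\<lambda>v. 2 * (L$1 * v$1 + L$2 * v$2 + L$3 * v$3 + L$4 * v$4 + L$5 * v$5 + L$0 * v$0))"
proof -
  have "(casimir1 has_derivative (\<lambda>v. 2 * (L$1 * v$1 + L$2 * v$2 + L$3 * v$3 + L$4 * v$4 + L$5 * v$5 + L$0 * v$0))) (at L)"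
    unfolding cas_fun
    apply (intro derivative_eq_intros)
    apply (rule refl)+
    apply (simp add: fun_eq_iff algebra_simps)
    done
  then show ?thesis by (rule frechet_derivative_at[symmetric])
qed
lemma fd_P: "frechet_derivative pfaff (at L) = (\<lambda>v. L$0 * v$1 - L$5 * v$2 + L$4 * v$3 + L$3 * v$4 - L$2 * v$5 + L$1 * v$0)"
proof -
  have "(pfaff has_derivative (\<lambda>v. L$0 * v$1 - L$5 * v$2 + L$4 * v$3 + L$3 * v$4 - L$2 * v$5 + L$1 * v$0)) (at L)"
    unfolding pfaff_eq[abs_def]
    apply (intro derivative_eq_intros)
    apply (rule refl)+
    apply (simp add: fun_eq_iff algebra_simps)
    done
  then show ?thesis by (rule frechet_derivative_at[symmetric])
qed
lemma fd_l34: "frechet_derivative (ell 3 4) (at L) = (\<lambda>v. v$0)"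
proof -
  have "(ell 3 4 has_derivative (\<lambda>v. v$0)) (at L)"
    unfolding ell_simps[abs_def] by (rule has_derivative_nth6)
  then show ?thesis by (rule frechet_derivative_at[symmetric])
qed
lemma fd_G: "frechet_derivative G23 (at L) = (\<lambda>v. 2 * (L$1 * v$1 + L$2 * v$2 + L$3 * v$3))"
proof -
  have "(G23 has_derivative (\<lambda>v. 2 * (L$1 * v$1 + L$2 * v$2 + L$3 * v$3))) (at L)"
    unfolding G23_eq[abs_def]
    apply (intro derivative_eq_intros)
    apply (rule refl)+
    apply (simp add: fun_eq_iff algebra_simps)
    done
  then show ?thesis by (rule frechet_derivative_at[symmetric])
qed
lemma fd_F: "frechet_derivative (\<lambda>M. a * ell 3 4 M + b * G23 M) (at L) = (\<lambda>v. a * v$0 + b * (2 * (L$1 * v$1 + L$2 * v$2 + L$3 * v$3)))"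
proof -
  have "((\<lambda>M. a * ell 3 4 M + b * G23 M) has_derivative (\<lambda>v. a * v$0 + b * (2 * (L$1 * v$1 + L$2 * v$2 + L$3 * v$3)))) (at L)"
    unfolding G23_eq ell_simps
    apply (intro derivative_eq_intros)
    apply (rule refl)+
    apply (simp add: fun_eq_iff algebra_simps)
    done
  then show ?thesis by (rule frechet_derivative_at[symmetric])
qed

lemma grad_F: "grad6 (\<lambda>M. a * ell 3 4 M + b * G23 M) M = v6 (2*b*M$1) (2*b*M$2) (2*b*M$3) 0 0 a"
  unfolding grad6_def fd_F by (simp add: vec6_eq_iff axis_def)

lemma pm_rows: "(poisson_matrix M *v g) = v6 (M$4 * g$2 + M$5 * g$3 - M$2 * g$4 - M$3 * g$5)
   (- M$4 * g$1 + M$0 * g$3 + M$1 * g$4 - M$3 * g$0)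
   (- M$5 * g$1 - M$0 * g$2 + M$1 * g$5 + M$2 * g$0)
   (M$2 * g$1 - M$1 * g$2 + M$0 * g$5 - M$5 * g$0)
   (M$3 * g$1 - M$1 * g$3 - M$0 * g$4 + M$4 * g$0)
   (M$3 * g$2 - M$2 * g$3 + M$5 * g$4 - M$4 * g$5)"
  unfolding vec6_eq_iff matrix_vector_mult_def poisson_matrix_def
  by (simp add: sum_6 pr6_def lp_bracket_def kd_def ell_simps ell_simps[unfolded One_nat_def] algebra_simps)

lemma ham_F: "ham_vf (\<lambda>M. a * ell 3 4 M + b * G23 M) M =
  v6 (2*b*(M$2 * M$4 + M$3 * M$5)) (2*b*(M$3 * M$0 - M$1 * M$4) - a * M$3) (a * M$2 - 2*b*(M$1 * M$5 + M$2 * M$0)) (- a * M$5) (a * M$4) 0"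
  unfolding ham_vf_def grad_F pm_rows by (simp add: algebra_simps)

lemma fd_ham: "frechet_derivative (ham_vf (\<lambda>M. a * ell 3 4 M + b * G23 M)) (at L) =
  (\<lambda>h. v6 (2*b*(h$2 * L$4 + L$2 * h$4 + h$3 * L$5 + L$3 * h$5))
            (2*b*(h$3 * L$0 + L$3 * h$0 - h$1 * L$4 - L$1 * h$4) - a * h$3)
            (a * h$2 - 2*b*(h$1 * L$5 + L$1 * h$5 + h$2 * L$0 + L$2 * h$0))
            (- a * h$5) (a * h$4) 0)"
proof -
  have e: "ham_vf (\<lambda>M. a * ell 3 4 M + b * G23 M) = (\<lambda>M. v6 (2*b*(M$2 * M$4 + M$3 * M$5)) (2*b*(M$3 * M$0 - M$1 * M$4) - a * M$3) (a * M$2 - 2*b*(M$1 * M$5 + M$2 * M$0)) (- a * M$5) (a * M$4) 0)"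
    by (rule ext) (rule ham_F)
  have "(ham_vf (\<lambda>M. a * ell 3 4 M + b * G23 M) has_derivative (\<lambda>h. v6 (2*b*(h$2 * L$4 + L$2 * h$4 + h$3 * L$5 + L$3 * h$5))
            (2*b*(h$3 * L$0 + L$3 * h$0 - h$1 * L$4 - L$1 * h$4) - a * h$3)
            (a * h$2 - 2*b*(h$1 * L$5 + L$1 * h$5 + h$2 * L$0 + L$2 * h$0))
            (- a * h$5) (a * h$4) 0)) (at L)"
    unfolding e
    apply (rule has_derivative_v6)
    subgoal by (rule has_derivative_eq_rhs, (intro derivative_eq_intros), (rule refl)+, (simp add: fun_eq_iff algebra_simps)?)
    subgoal by (rule has_derivative_eq_rhs, (intro derivative_eq_intros), (rule refl)+, (simp add: fun_eq_iff algebra_simps)?)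
    subgoal by (rule has_derivative_eq_rhs, (intro derivative_eq_intros), (rule refl)+, (simp add: fun_eq_iff algebra_simps)?)
    subgoal by (rule has_derivative_eq_rhs, (intro derivative_eq_intros), (rule refl)+, (simp add: fun_eq_iff algebra_simps)?)
    subgoal by (rule has_derivative_eq_rhs, (intro derivative_eq_intros), (rule refl)+, (simp add: fun_eq_iff algebra_simps)?)
    subgoal by (rule has_derivative_const)
    done
  then show ?thesis by (rule frechet_derivative_at[symmetric])
qed

lemma ham_l34: "ham_vf (ell 3 4) M = v6 0 (- M$3) (M$2) (- M$5) (M$4) 0"
proof -
  have "ell 3 4 = (\<lambda>M. 1 * ell 3 4 M + 0 * G23 M)" by simp
  then show ?thesis using ham_F[of 1 0 M] by simp
qed

lemma ham_G: "ham_vf G23 M = v6 (2*(M$2 * M$4 + M$3 * M$5)) (2*(M$3 * M$0 - M$1 * M$4)) (- 2*(M$1 * M$5 + M$2 * M$0)) 0 0 0"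
proof -
  have "G23 = (\<lambda>M. 0 * ell 3 4 M + 1 * G23 M)" by simp
  then show ?thesis using ham_F[of 0 1 M] by simp
qed

lemma tsp: "v \<in> tangent_space L \<longleftrightarrow> L$1 * v$1 + L$2 * v$2 + L$3 * v$3 + L$4 * v$4 + L$5 * v$5 + L$0 * v$0 = 0
   \<and> L$0 * v$1 - L$5 * v$2 + L$4 * v$3 + L$3 * v$4 - L$2 * v$5 + L$1 * v$0 = 0"
  unfolding tangent_space_def fd_C fd_P mem_Collect_eq by (simp only: mult_eq_0_iff) simp

lemma rank_eq: "dmom_rank (ell 3 4) G23 L = dim ((\<lambda>v. (v$0, 2 * (L$1 * v$1 + L$2 * v$2 + L$3 * v$3))) ` tangent_space L)"
  unfolding dmom_rank_def fd_l34 fd_G ..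

lemma Mh_iff: "L \<in> Mh (1/2) \<longleftrightarrow> (L$1)^2 + (L$2)^2 + (L$3)^2 + (L$4)^2 + (L$5)^2 + (L$0)^2 = 1 \<and> L$1 * L$0 - L$2 * L$5 + L$3 * L$4 = 0"
  unfolding Mh_def casimir1_eq pfaff_eq by simp

lemma dim_le1: fixes S :: "(real \<times> real) set" assumes "S \<subseteq> span {w}" shows "dim S \<le> 1"
  using dim_le_card[OF assms] by simp

lemma dim_ge1: fixes S :: "(real \<times> real) set" assumes "w \<in> S" "w \<noteq> 0" shows "1 \<le> dim S"
proof -
  have "independent {w}" using assms(2) by (simp add: independent_insert)
  then show ?thesis using independent_card_le_dim[of "{w}" S] assms(1) by simp
qed

lemma dim_ge2: fixes S :: "(real \<times> real) set"
  assumes "(\<alpha>, 0) \<in> S" "(\<beta>, \<delta>) \<in> S" "\<alpha> \<noteq> 0" "\<delta> \<noteq> 0" shows "2 \<le> dim S"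
proof -
  have ne: "(\<beta>, \<delta>) \<noteq> (\<alpha>, 0)" using assms by auto
  have "(\<beta>, \<delta>) \<notin> span {(\<alpha>, 0)}" using assms(4) by (auto simp: span_singleton)
  moreover have "independent {(\<alpha>, 0::real)}" using assms(3) by (simp add: independent_insert zero_prod_def)
  ultimately have "independent {(\<beta>, \<delta>), (\<alpha>, 0)}" by (rule independent_insertI)
  then show ?thesis using independent_card_le_dim[of "{(\<beta>, \<delta>), (\<alpha>, 0)}" S] assms(1,2) ne by simp
qed


lemma sq3_zero: fixes a b c :: real assumes "a^2 + b^2 + c^2 = 0" shows "a = 0" "b = 0" "c = 0"
proof -
  have "a^2 = 0" "b^2 = 0" "c^2 = 0" using assms by (smt (verit) zero_le_power2)+
  then show "a = 0" "b = 0" "c = 0" by simp_all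
qed

lemma sq2_zero: fixes a b :: real assumes "a^2 + b^2 = 0" shows "a = 0" "b = 0"
proof -
  have "a^2 = 0" "b^2 = 0" using assms by (smt (verit) zero_le_power2)+
  then show "a = 0" "b = 0" by simp_all
qed

lemma aux4: "(e::real) = 4 * q \<Longrightarrow> q > 0 \<Longrightarrow> e \<noteq> 0" by simp

lemma crit_iff:
  assumes M: "L \<in> Mh (1/2)"
  shows "dmom_rank (ell 3 4) G23 L < 2 \<longleftrightarrow> (G23 L = 1 - (ell 3 4 L)^2 \<or> G23 L = 0)"
proof -
  from M have c: "(L$1)^2 + (L$2)^2 + (L$3)^2 + (L$4)^2 + (L$5)^2 + (L$0)^2 = 1"
    and p: "L$1 * L$0 - L$2 * L$5 + L$3 * L$4 = 0" by (auto simp: Mh_iff)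
  define S where "S = (\<lambda>v. (v$0, 2 * (L$1 * v$1 + L$2 * v$2 + L$3 * v$3))) ` tangent_space L"
  have r: "dmom_rank (ell 3 4) G23 L = dim S" unfolding S_def by (rule rank_eq)
  have memS: "\<And>v. v \<in> tangent_space L \<Longrightarrow> (v$0, 2 * (L$1 * v$1 + L$2 * v$2 + L$3 * v$3)) \<in> S"
    unfolding S_def by blast
  show ?thesis
  proof
    assume "dmom_rank (ell 3 4) G23 L < 2"
    then have d: "dim S < 2" using r by simp
    show "G23 L = 1 - (ell 3 4 L)^2 \<or> G23 L = 0"
    proof (rule ccontr)
      assume "\<not> (G23 L = 1 - (ell 3 4 L)^2 \<or> G23 L = 0)"
      then have g: "(L$1)^2 + (L$2)^2 + (L$3)^2 \<noteq> 0" and b: "(L$4)^2 + (L$5)^2 \<noteq> 0"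
        using c by (auto simp: G23_eq ell_simps)
      have "(L$5, 0) \<in> S" using memS[of "v6 (- L$2) (L$1) 0 0 (- L$0) (L$5)"] p
        by (simp add: tsp algebra_simps)
      moreover have "(- L$4, 0) \<in> S" using memS[of "v6 (- L$3) 0 (L$1) (L$0) 0 (- L$4)"] p
        by (simp add: tsp algebra_simps)
      moreover have "L$5 \<noteq> 0 \<or> - L$4 \<noteq> 0" using b by auto
      ultimately obtain \<alpha> where a1: "(\<alpha>, 0) \<in> S" "\<alpha> \<noteq> 0" by blast
      have m1: "(0, 2 * (- L$2 * L$4 - L$3 * L$5)) \<in> S" using memS[of "v6 0 (- L$4) (- L$5) (L$2) (L$3) 0"] p
        by (simp add: tsp algebra_simps)
      have m2: "(L$3, 2 * (L$1 * L$4 - L$3 * L$0)) \<in> S" using memS[of "v6 (L$4) 0 (- L$0) (- L$1) 0 (L$3)"] p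
        by (simp add: tsp algebra_simps)
      have m3: "(- L$2, 2 * (L$1 * L$5 + L$2 * L$0)) \<in> S" using memS[of "v6 (L$5) (L$0) 0 0 (- L$1) (- L$2)"] p
        by (simp add: tsp algebra_simps)
      have pos: "((L$1)^2 + (L$2)^2 + (L$3)^2) * ((L$4)^2 + (L$5)^2 + (L$0)^2) > 0"
      proof (rule mult_pos_pos)
        show "(L$1)^2 + (L$2)^2 + (L$3)^2 > 0" using g by (smt (verit) zero_le_power2)
        show "(L$4)^2 + (L$5)^2 + (L$0)^2 > 0" using b by (smt (verit) zero_le_power2)
      qed
      have "(2 * (- L$2 * L$4 - L$3 * L$5))^2 + (2 * (L$1 * L$4 - L$3 * L$0))^2 + (2 * (L$1 * L$5 + L$2 * L$0))^2 \<noteq> 0"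
        by (rule aux4[OF _ pos]) (use p in algebra)
      then have "2 * (- L$2 * L$4 - L$3 * L$5) \<noteq> 0 \<or> 2 * (L$1 * L$4 - L$3 * L$0) \<noteq> 0 \<or> 2 * (L$1 * L$5 + L$2 * L$0) \<noteq> 0"
        by auto
      then obtain \<beta> \<delta> where a2: "(\<beta>, \<delta>) \<in> S" "\<delta> \<noteq> 0" using m1 m2 m3 by blast
      have "2 \<le> dim S" by (rule dim_ge2[OF a1(1) a2(1) a1(2) a2(2)])
      then show False using d by simp
    qed
  next
    assume h: "G23 L = 1 - (ell 3 4 L)^2 \<or> G23 L = 0"
    have "dim S \<le> 1"
    proof (cases "G23 L = 0")
      case True
      then have "(L$1)^2 + (L$2)^2 + (L$3)^2 = 0" by (simp add: G23_eq)
      note z = sq3_zero[OF this]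
      show ?thesis
      proof (rule dim_le1[of S "(1, 0)"])
        show "S \<subseteq> span {(1, 0)}"
        proof
          fix z assume "z \<in> S"
          then obtain v :: "real^6" where "z = (v$0, 2 * (L$1 * v$1 + L$2 * v$2 + L$3 * v$3))" unfolding S_def by blast
          then have "z = v$0 *\<^sub>R (1, 0)" using z by simp
          then show "z \<in> span {(1, 0)}" by (simp only:) (rule span_scale, rule span_base, simp)
        qed
      qed
    next
      case False
      then have "G23 L = 1 - (ell 3 4 L)^2" using h by simp
      then have "(L$4)^2 + (L$5)^2 = 0" using c by (simp add: G23_eq ell_simps)
      note z = sq2_zero[OF this]
      show ?thesis
      proof (rule dim_le1[of S "(1, - 2 * L$0)"])
        show "S \<subseteq> span {(1, - 2 * L$0)}"
        proof
          fix z assume "z \<in> S"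
          then obtain v :: "real^6" where v: "v \<in> tangent_space L" "z = (v$0, 2 * (L$1 * v$1 + L$2 * v$2 + L$3 * v$3))" unfolding S_def by blast
          from v(1) z have "L$1 * v$1 + L$2 * v$2 + L$3 * v$3 = - L$0 * v$0" by (simp add: tsp)
          then have "z = v$0 *\<^sub>R (1, - 2 * L$0)" using v(2) by simp
          then show "z \<in> span {(1, - 2 * L$0)}" by (simp only:) (rule span_scale, rule span_base, simp)
        qed
      qed
    qed
    then show "dmom_rank (ell 3 4) G23 L < 2" using r by simp
  qed
qed

lemma elliptic_intro:
  assumes "(a,b) \<noteq> (0::real,0::real)"
    and "\<forall>v\<in>tangent_space L. a * frechet_derivative f1 (at L) v + b * frechet_derivative f2 (at L) v = 0"
    and "frechet_derivative (ham_vf (\<lambda>M. a * f1 M + b * f2 M)) (at L) = A"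
    and "tangent_space L \<inter> {v. frechet_derivative f1 (at L) v = 0 \<and> frechet_derivative f2 (at L) v = 0} = W"
    and "span {ham_vf f1 L, ham_vf f2 L} = V"
    and "\<exists>\<mu>. trans_eigenvalue A W V \<mu>"
    and "\<forall>\<mu>. trans_eigenvalue A W V \<mu> \<longrightarrow> Re \<mu> = 0 \<and> Im \<mu> \<noteq> 0"
  shows "elliptic_transverse f1 f2 L"
  unfolding elliptic_transverse_def
  apply (rule exI[of _ a], rule exI[of _ b])
  apply (unfold Let_def assms(3,4,5))
  using assms(1,2,6,7) by blast

lemma C1_point:
  assumes M: "L \<in> Mh (1/2)" and G: "G23 L = 1 - (ell 3 4 L)^2" and t0: "ell 3 4 L \<noteq> 0" and g0: "G23 L \<noteq> 0"
  shows "dmom_rank (ell 3 4) G23 L = 1 \<and> elliptic_transverse (ell 3 4) G23 L"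
proof -
  define t where "t = L$0"
  from M have c: "(L$1)^2 + (L$2)^2 + (L$3)^2 + (L$4)^2 + (L$5)^2 + (L$0)^2 = 1"
    and p: "L$1 * L$0 - L$2 * L$5 + L$3 * L$4 = 0" by (auto simp: Mh_iff)
  have t0': "t \<noteq> 0" using t0 by (simp add: t_def ell_simps)
  have "(L$4)^2 + (L$5)^2 = 0" using c G by (simp add: G23_eq ell_simps)
  note z45 = sq2_zero[OF this]
  have L4: "L$4 = 0" and L5: "L$5 = 0" using z45 by auto
  have tL: "L$0 = t" by (simp add: t_def)
  have L1: "L$1 = 0" using p L4 L5 t0' tL by simp
  have n: "(L$2)^2 + (L$3)^2 \<noteq> 0" using g0 L1 by (simp add: G23_eq)
  define S where "S = (\<lambda>v. (v$0, 2 * (L$1 * v$1 + L$2 * v$2 + L$3 * v$3))) ` tangent_space L"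
  have r: "dmom_rank (ell 3 4) G23 L = dim S" unfolding S_def by (rule rank_eq)
  have memS: "\<And>v. v \<in> tangent_space L \<Longrightarrow> (v$0, 2 * (L$1 * v$1 + L$2 * v$2 + L$3 * v$3)) \<in> S"
    unfolding S_def by blast
  have le: "dim S \<le> 1"
  proof (rule dim_le1[of S "(1, - 2 * L$0)"])
    show "S \<subseteq> span {(1, - 2 * L$0)}"
    proof
      fix z assume "z \<in> S"
      then obtain v :: "real^6" where v: "v \<in> tangent_space L" "z = (v$0, 2 * (L$1 * v$1 + L$2 * v$2 + L$3 * v$3))" unfolding S_def by blast
      from v(1) L4 L5 have "L$1 * v$1 + L$2 * v$2 + L$3 * v$3 = - L$0 * v$0" by (simp add: tsp)
      then have "z = v$0 *\<^sub>R (1, - 2 * L$0)" using v(2) by simp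
      then show "z \<in> span {(1, - 2 * L$0)}" by (simp only:) (rule span_scale, rule span_base, simp)
    qed
  qed
  have m2: "(L$3, 2 * (L$1 * L$4 - L$3 * L$0)) \<in> S" using memS[of "v6 (L$4) 0 (- L$0) (- L$1) 0 (L$3)"] p
    by (simp add: tsp algebra_simps)
  have m3: "(- L$2, 2 * (L$1 * L$5 + L$2 * L$0)) \<in> S" using memS[of "v6 (L$5) (L$0) 0 0 (- L$1) (- L$2)"] p
    by (simp add: tsp algebra_simps)
  have ge: "1 \<le> dim S"
  proof (cases "L$3 = 0")
    case True
    then have "L$2 \<noteq> 0" using n by simp
    then show ?thesis using dim_ge1[OF m3] by (simp add: zero_prod_def)
  next
    case False
    then show ?thesis using dim_ge1[OF m2] by (simp add: zero_prod_def)
  qed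
  have rank1: "dmom_rank (ell 3 4) G23 L = 1" using le ge r by simp
  define A where "A = (\<lambda>h::real^6. v6 (2 * (L$2 * h$4 + L$3 * h$5)) (2 * L$3 * h$0) (- 2 * L$2 * h$0) (- (2 * t) * h$5) (2 * t * h$4) 0)"
  define W where "W = {v::real^6. v \<in> tangent_space L \<and> v$0 = 0 \<and> L$2 * v$2 + L$3 * v$3 = 0}"
  define u where "u = v6 0 (- L$3) (L$2) 0 0 0"
  define V where "V = span {u}"
  have hA: "frechet_derivative (ham_vf (\<lambda>M. (2 * t) * ell 3 4 M + 1 * G23 M)) (at L) = A"
    unfolding fd_ham A_def by (simp add: fun_eq_iff vec6_eq_iff L1 L4 L5 tL algebra_simps)
  have hW: "tangent_space L \<inter> {v. frechet_derivative (ell 3 4) (at L) v = 0 \<and> frechet_derivative G23 (at L) v = 0} = W"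
    unfolding W_def fd_l34 fd_G by (auto simp: L1)
  have hV: "span {ham_vf (ell 3 4) L, ham_vf G23 L} = V"
  proof -
    have "ham_vf (ell 3 4) L = u" unfolding ham_l34 u_def by (simp add: L4 L5)
    moreover have "ham_vf G23 L = (- 2 * t) *\<^sub>R u" unfolding ham_G u_def by (simp add: vec6_eq_iff L1 L4 L5 tL)
    moreover have "span {u, (- 2 * t) *\<^sub>R u} = span {u}"
    proof -
      have "(- 2 * t) *\<^sub>R u \<in> span {u}" by (rule span_scale, rule span_base, simp)
      then have "span (insert ((- 2 * t) *\<^sub>R u) {u}) = span {u}" by (rule span_redundant)
      then show ?thesis by (simp add: insert_commute)
    qed
    ultimately show ?thesis unfolding V_def by simp
  qed
  have Vcomp: "\<And>z. z \<in> V \<Longrightarrow> z$4 = 0 \<and> z$5 = 0"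
    unfolding V_def span_singleton u_def by auto
  have inV: "\<And>z. z \<in> W \<Longrightarrow> z$4 = 0 \<Longrightarrow> z$5 = 0 \<Longrightarrow> z \<in> V"
  proof -
    fix z :: "real^6" assume zW: "z \<in> W" and z4: "z$4 = 0" and z5: "z$5 = 0"
    from zW have z0: "z$0 = 0" and h23: "L$2 * z$2 + L$3 * z$3 = 0" and pt: "t * z$1 = 0"
      unfolding W_def by (auto simp: tsp L1 L4 L5 tL z4 z5)
    have z1: "z$1 = 0" using pt t0' by simp
    define k where "k = (L$2 * z$3 - L$3 * z$2) / ((L$2)^2 + (L$3)^2)"
    have e2: "(L$2 * z$3 - L$3 * z$2) * (- L$3) = z$2 * ((L$2)^2 + (L$3)^2)" using h23 by algebra
    have e3: "(L$2 * z$3 - L$3 * z$2) * (L$2) = z$3 * ((L$2)^2 + (L$3)^2)" using h23 by algebra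
    have "k * (- L$3) = z$2" unfolding k_def using e2 n by (simp add: field_simps)
    moreover have "k * (L$2) = z$3" unfolding k_def using e3 n by (simp add: field_simps)
    ultimately have "z = k *\<^sub>R u" unfolding u_def by (simp add: vec6_eq_iff z0 z1 z4 z5)
    then show "z \<in> V" unfolding V_def span_singleton by auto
  qed
  have ex: "\<exists>\<mu>. trans_eigenvalue A W V \<mu>"
  proof (intro exI)
    define x where "x = v6 (- L$3 / t) 0 0 1 0 0"
    define y where "y = v6 (- L$2 / t) 0 0 0 (-1) 0"
    have xW: "x \<in> W" unfolding W_def x_def using t0' by (simp add: tsp L1 L4 L5 tL)
    have yW: "y \<in> W" unfolding W_def y_def using t0' by (simp add: tsp L1 L4 L5 tL)
    have xV: "x \<notin> V" using Vcomp[of x] by (auto simp: x_def)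
    have e1: "A x - (Re (Complex 0 (2 * t)) *\<^sub>R x - Im (Complex 0 (2 * t)) *\<^sub>R y) = 0"
      unfolding A_def x_def y_def using t0' by (simp add: vec6_eq_iff field_simps)
    have e2: "A y - (Im (Complex 0 (2 * t)) *\<^sub>R x + Re (Complex 0 (2 * t)) *\<^sub>R y) = 0"
      unfolding A_def x_def y_def using t0' by (simp add: vec6_eq_iff field_simps)
    show "trans_eigenvalue A W V (Complex 0 (2 * t))"
      unfolding trans_eigenvalue_def
      apply (rule bexI[OF _ xW], rule bexI[OF _ yW])
      using xV e1 e2 by (simp add: V_def span_zero)
  qed
  have all: "\<forall>\<mu>. trans_eigenvalue A W V \<mu> \<longrightarrow> Re \<mu> = 0 \<and> Im \<mu> \<noteq> 0"
  proof (intro allI impI)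
    fix \<mu> assume "trans_eigenvalue A W V \<mu>"
    then obtain x y where xW: "x \<in> W" and yW: "y \<in> W" and nV: "x \<notin> V \<or> y \<notin> V"
      and h1: "A x - (Re \<mu> *\<^sub>R x - Im \<mu> *\<^sub>R y) \<in> V" and h2: "A y - (Im \<mu> *\<^sub>R x + Re \<mu> *\<^sub>R y) \<in> V"
      unfolding trans_eigenvalue_def by blast
    define r where "r = Re \<mu>"
    define s where "s = Im \<mu>"
    from Vcomp[OF h1] have e1: "- (2 * t) * x$5 - (r * x$4 - s * y$4) = 0" and e2: "2 * t * x$4 - (r * x$5 - s * y$5) = 0"
      by (simp_all add: A_def r_def s_def)
    from Vcomp[OF h2] have e3: "- (2 * t) * y$5 - (s * x$4 + r * y$4) = 0" and e4: "2 * t * y$4 - (s * x$5 + r * y$5) = 0"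
      by (simp_all add: A_def r_def s_def)
    have rE: "r * ((x$4)^2 + (x$5)^2 + (y$4)^2 + (y$5)^2) = 0" using e1 e2 e3 e4 by algebra
    have E: "(x$4)^2 + (x$5)^2 + (y$4)^2 + (y$5)^2 \<noteq> 0"
    proof
      assume "(x$4)^2 + (x$5)^2 + (y$4)^2 + (y$5)^2 = 0"
      then have "x$4 = 0 \<and> x$5 = 0 \<and> y$4 = 0 \<and> y$5 = 0" by (smt (verit) zero_le_power2 power_zero_numeral power2_eq_square mult_eq_0_iff)
      then show False using inV xW yW nV by blast
    qed
    have r0: "r = 0" using rE E by simp
    have s0: "s \<noteq> 0"
    proof
      assume "s = 0"
      then have "x$4 = 0 \<and> x$5 = 0 \<and> y$4 = 0 \<and> y$5 = 0" using e1 e2 e3 e4 r0 t0' by simp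
      then show False using inV xW yW nV by blast
    qed
    show "Re \<mu> = 0 \<and> Im \<mu> \<noteq> 0" using r0 s0 by (simp add: r_def s_def)
  qed
  have "elliptic_transverse (ell 3 4) G23 L"
  proof (rule elliptic_intro[OF _ _ hA hW hV ex all])
    show "(2 * t, 1) \<noteq> (0::real, 0::real)" by simp
    show "\<forall>v\<in>tangent_space L. 2 * t * frechet_derivative (ell 3 4) (at L) v + 1 * frechet_derivative G23 (at L) v = 0"
      unfolding fd_l34 fd_G by (auto simp: tsp L4 L5 tL algebra_simps)
  qed
  then show ?thesis using rank1 by simp
qed

lemma C2_point:
  assumes M: "L \<in> Mh (1/2)" and G: "G23 L = 0" and t1: "(ell 3 4 L)^2 \<noteq> 1"
  shows "dmom_rank (ell 3 4) G23 L = 1 \<and> elliptic_transverse (ell 3 4) G23 L"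
proof -
  from M have c: "(L$1)^2 + (L$2)^2 + (L$3)^2 + (L$4)^2 + (L$5)^2 + (L$0)^2 = 1"
    and p: "L$1 * L$0 - L$2 * L$5 + L$3 * L$4 = 0" by (auto simp: Mh_iff)
  have "(L$1)^2 + (L$2)^2 + (L$3)^2 = 0" using G by (simp add: G23_eq)
  note z123 = sq3_zero[OF this]
  have L1: "L$1 = 0" and L2: "L$2 = 0" and L3: "L$3 = 0" using z123 by auto
  have c': "(L$4)^2 + (L$5)^2 + (L$0)^2 = 1" using c L1 L2 L3 by simp
  have n: "(L$4)^2 + (L$5)^2 \<noteq> 0"
  proof
    assume "(L$4)^2 + (L$5)^2 = 0"
    then have "(L$0)^2 = 1" using c' by simp
    then show False using t1 by (simp add: ell_simps)
  qed
  define S where "S = (\<lambda>v. (v$0, 2 * (L$1 * v$1 + L$2 * v$2 + L$3 * v$3))) ` tangent_space L"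
  have r: "dmom_rank (ell 3 4) G23 L = dim S" unfolding S_def by (rule rank_eq)
  have memS: "\<And>v. v \<in> tangent_space L \<Longrightarrow> (v$0, 2 * (L$1 * v$1 + L$2 * v$2 + L$3 * v$3)) \<in> S"
    unfolding S_def by blast
  have le: "dim S \<le> 1"
  proof (rule dim_le1[of S "(1, 0)"])
    show "S \<subseteq> span {(1, 0)}"
    proof
      fix z assume "z \<in> S"
      then obtain v :: "real^6" where "z = (v$0, 2 * (L$1 * v$1 + L$2 * v$2 + L$3 * v$3))" unfolding S_def by blast
      then have "z = v$0 *\<^sub>R (1, 0)" using L1 L2 L3 by simp
      then show "z \<in> span {(1, 0)}" by (simp only:) (rule span_scale, rule span_base, simp)
    qed
  qed
  have m4: "(L$5, 0) \<in> S" using memS[of "v6 (- L$2) (L$1) 0 0 (- L$0) (L$5)"] p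
    by (simp add: tsp algebra_simps)
  have m5: "(- L$4, 0) \<in> S" using memS[of "v6 (- L$3) 0 (L$1) (L$0) 0 (- L$4)"] p
    by (simp add: tsp algebra_simps)
  have ge: "1 \<le> dim S"
  proof (cases "L$5 = 0")
    case True
    then have "L$4 \<noteq> 0" using n by simp
    then show ?thesis using dim_ge1[OF m5] by (simp add: zero_prod_def)
  next
    case False
    then show ?thesis using dim_ge1[OF m4] by (simp add: zero_prod_def)
  qed
  have rank1: "dmom_rank (ell 3 4) G23 L = 1" using le ge r by simp
  define A where "A = (\<lambda>h::real^6. v6 (2 * (h$2 * L$4 + h$3 * L$5)) (2 * (h$3 * L$0 - h$1 * L$4)) (- 2 * (h$1 * L$5 + h$2 * L$0)) 0 0 0)"
  define W where "W = {v::real^6. v \<in> tangent_space L \<and> v$0 = 0}"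
  define u where "u = v6 0 0 0 (- L$5) (L$4) 0"
  define V where "V = span {u}"
  have hA: "frechet_derivative (ham_vf (\<lambda>M. 0 * ell 3 4 M + 1 * G23 M)) (at L) = A"
    unfolding fd_ham A_def by (simp add: fun_eq_iff vec6_eq_iff L1 L2 L3 algebra_simps)
  have hW: "tangent_space L \<inter> {v. frechet_derivative (ell 3 4) (at L) v = 0 \<and> frechet_derivative G23 (at L) v = 0} = W"
    unfolding W_def fd_l34 fd_G by (auto simp: L1 L2 L3)
  have hV: "span {ham_vf (ell 3 4) L, ham_vf G23 L} = V"
  proof -
    have "ham_vf (ell 3 4) L = u" unfolding ham_l34 u_def by (simp add: L2 L3)
    moreover have "ham_vf G23 L = 0" unfolding ham_G by (simp add: vec6_eq_iff L1 L2 L3)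
    moreover have "span {u, 0} = span {u}"
    proof -
      have "0 \<in> span {u}" by (rule span_zero)
      then have "span (insert 0 {u}) = span {u}" by (rule span_redundant)
      then show ?thesis by (simp add: insert_commute)
    qed
    ultimately show ?thesis unfolding V_def by simp
  qed
  have Vcomp: "\<And>z. z \<in> V \<Longrightarrow> z$1 = 0 \<and> z$2 = 0 \<and> z$3 = 0"
    unfolding V_def span_singleton u_def by auto
  have inV: "\<And>z. z \<in> W \<Longrightarrow> z$1 = 0 \<Longrightarrow> z$2 = 0 \<Longrightarrow> z$3 = 0 \<Longrightarrow> z \<in> V"
  proof -
    fix z :: "real^6" assume zW: "z \<in> W" and z1: "z$1 = 0" and z2: "z$2 = 0" and z3: "z$3 = 0"
    from zW have z0: "z$0 = 0" and h45: "L$4 * z$4 + L$5 * z$5 = 0"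
      unfolding W_def by (auto simp: tsp L1 L2 L3)
    define k where "k = (L$4 * z$5 - L$5 * z$4) / ((L$4)^2 + (L$5)^2)"
    have e4: "(L$4 * z$5 - L$5 * z$4) * (- L$5) = z$4 * ((L$4)^2 + (L$5)^2)" using h45 by algebra
    have e5: "(L$4 * z$5 - L$5 * z$4) * (L$4) = z$5 * ((L$4)^2 + (L$5)^2)" using h45 by algebra
    have "k * (- L$5) = z$4" unfolding k_def using e4 n by (simp add: field_simps)
    moreover have "k * (L$4) = z$5" unfolding k_def using e5 n by (simp add: field_simps)
    ultimately have "z = k *\<^sub>R u" unfolding u_def by (simp add: vec6_eq_iff z0 z1 z2 z3)
    then show "z \<in> V" unfolding V_def span_singleton by auto
  qed
  have ex: "\<exists>\<mu>. trans_eigenvalue A W V \<mu>"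
  proof (intro exI)
    define x where "x = v6 0 (L$4) (L$5) 0 0 0"
    define y where "y = v6 (- ((L$4)^2 + (L$5)^2)) (- L$0 * L$5) (L$0 * L$4) 0 0 0"
    have xW: "x \<in> W" unfolding W_def x_def by (simp add: tsp L1 L2 L3 algebra_simps)
    have yW: "y \<in> W" unfolding W_def y_def by (simp add: tsp L1 L2 L3 algebra_simps power2_eq_square)
    have xV: "x \<notin> V" using Vcomp[of x] n by (auto simp: x_def)
    have e1: "A x - (Re (Complex 0 2) *\<^sub>R x - Im (Complex 0 2) *\<^sub>R y) = 0"
      unfolding A_def x_def y_def by (simp add: vec6_eq_iff algebra_simps power2_eq_square)
    have e2: "A y - (Im (Complex 0 2) *\<^sub>R x + Re (Complex 0 2) *\<^sub>R y) = 0"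
      unfolding A_def x_def y_def using c' by (simp add: vec6_eq_iff; safe; algebra)
    show "trans_eigenvalue A W V (Complex 0 2)"
      unfolding trans_eigenvalue_def
      apply (rule bexI[OF _ xW], rule bexI[OF _ yW])
      using xV e1 e2 by (simp add: V_def span_zero)
  qed
  have all: "\<forall>\<mu>. trans_eigenvalue A W V \<mu> \<longrightarrow> Re \<mu> = 0 \<and> Im \<mu> \<noteq> 0"
  proof (intro allI impI)
    fix \<mu> assume "trans_eigenvalue A W V \<mu>"
    then obtain x y where xW: "x \<in> W" and yW: "y \<in> W" and nV: "x \<notin> V \<or> y \<notin> V"
      and h1: "A x - (Re \<mu> *\<^sub>R x - Im \<mu> *\<^sub>R y) \<in> V" and h2: "A y - (Im \<mu> *\<^sub>R x + Re \<mu> *\<^sub>R y) \<in> V"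
      unfolding trans_eigenvalue_def by blast
    define r where "r = Re \<mu>"
    define s where "s = Im \<mu>"
    from Vcomp[OF h1] have e1: "2 * (x$2 * L$4 + x$3 * L$5) - (r * x$1 - s * y$1) = 0"
      and e2: "2 * (x$3 * L$0 - x$1 * L$4) - (r * x$2 - s * y$2) = 0"
      and e3: "- 2 * (x$1 * L$5 + x$2 * L$0) - (r * x$3 - s * y$3) = 0"
      by (simp_all add: A_def r_def s_def)
    from Vcomp[OF h2] have f1: "2 * (y$2 * L$4 + y$3 * L$5) - (s * x$1 + r * y$1) = 0"
      and f2: "2 * (y$3 * L$0 - y$1 * L$4) - (s * x$2 + r * y$2) = 0"
      and f3: "- 2 * (y$1 * L$5 + y$2 * L$0) - (s * x$3 + r * y$3) = 0"
      by (simp_all add: A_def r_def s_def)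
    have rE: "r * ((x$1)^2 + (x$2)^2 + (x$3)^2 + (y$1)^2 + (y$2)^2 + (y$3)^2) = 0"
      using e1 e2 e3 f1 f2 f3 by algebra
    have E: "(x$1)^2 + (x$2)^2 + (x$3)^2 + (y$1)^2 + (y$2)^2 + (y$3)^2 \<noteq> 0"
    proof
      assume "(x$1)^2 + (x$2)^2 + (x$3)^2 + (y$1)^2 + (y$2)^2 + (y$3)^2 = 0"
      then have "(x$1)^2 + (x$2)^2 + (x$3)^2 = 0" "(y$1)^2 + (y$2)^2 + (y$3)^2 = 0"
        by (smt (verit) zero_le_power2)+
      then have "x$1 = 0 \<and> x$2 = 0 \<and> x$3 = 0 \<and> y$1 = 0 \<and> y$2 = 0 \<and> y$3 = 0"
        using sq3_zero by blast
      then show False using inV xW yW nV by blast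
    qed
    have r0: "r = 0" using rE E by simp
    have s0: "s \<noteq> 0"
    proof
      assume s0: "s = 0"
      from xW have px: "L$0 * x$1 - L$5 * x$2 + L$4 * x$3 = 0" unfolding W_def by (simp add: tsp L1 L2 L3)
      from yW have py: "L$0 * y$1 - L$5 * y$2 + L$4 * y$3 = 0" unfolding W_def by (simp add: tsp L1 L2 L3)
      have "(x$1)^2 + (x$2)^2 + (x$3)^2 = 0" using e1 e2 e3 px c' r0 s0 by algebra
      moreover have "(y$1)^2 + (y$2)^2 + (y$3)^2 = 0" using f1 f2 f3 py c' r0 s0 by algebra
      ultimately have "x$1 = 0 \<and> x$2 = 0 \<and> x$3 = 0 \<and> y$1 = 0 \<and> y$2 = 0 \<and> y$3 = 0"
        using sq3_zero by blast
      then show False using inV xW yW nV by blast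
    qed
    show "Re \<mu> = 0 \<and> Im \<mu> \<noteq> 0" using r0 s0 by (simp add: r_def s_def)
  qed
  have "elliptic_transverse (ell 3 4) G23 L"
  proof (rule elliptic_intro[OF _ _ hA hW hV ex all])
    show "(0, 1) \<noteq> (0::real, 0::real)" by simp
    show "\<forall>v\<in>tangent_space L. 0 * frechet_derivative (ell 3 4) (at L) v + 1 * frechet_derivative G23 (at L) v = 0"
      unfolding fd_l34 fd_G by (auto simp: L1 L2 L3)
  qed
  then show ?thesis using rank1 by simp
qed

theorem proposition7:
  shows "critical_values (ell 3 4) G23 (1/2) =
           {c \<in> (\<lambda>L. (ell 3 4 L, G23 L)) ` Mh (1/2). snd c = 1 - (fst c)^2 \<or> snd c = 0}
     \<and> (\<forall>c \<in> (\<lambda>L. (ell 3 4 L, G23 L)) ` Mh (1/2).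
           snd c = 1 - (fst c)^2 \<and> c \<notin> {(1, 0), (-1, 0), (0, 1)} \<longrightarrow>
           codim1_elliptic_value (ell 3 4) G23 (1/2) c)
     \<and> (\<forall>c \<in> (\<lambda>L. (ell 3 4 L, G23 L)) ` Mh (1/2).
           snd c = 0 \<and> c \<notin> {(1, 0), (-1, 0)} \<longrightarrow>
           codim1_elliptic_value (ell 3 4) G23 (1/2) c)"
proof -
  have P1: "critical_values (ell 3 4) G23 (1/2) =
           {c \<in> (\<lambda>L. (ell 3 4 L, G23 L)) ` Mh (1/2). snd c = 1 - (fst c)^2 \<or> snd c = 0}"
  proof
    show "critical_values (ell 3 4) G23 (1/2) \<subseteq> {c \<in> (\<lambda>L. (ell 3 4 L, G23 L)) ` Mh (1/2). snd c = 1 - (fst c)^2 \<or> snd c = 0}"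
      unfolding critical_values_def critical_point_def using crit_iff by auto
    show "{c \<in> (\<lambda>L. (ell 3 4 L, G23 L)) ` Mh (1/2). snd c = 1 - (fst c)^2 \<or> snd c = 0} \<subseteq> critical_values (ell 3 4) G23 (1/2)"
    proof
      fix c assume "c \<in> {c \<in> (\<lambda>L. (ell 3 4 L, G23 L)) ` Mh (1/2). snd c = 1 - (fst c)^2 \<or> snd c = 0}"
      then obtain L where L: "L \<in> Mh (1/2)" "c = (ell 3 4 L, G23 L)" and h: "G23 L = 1 - (ell 3 4 L)^2 \<or> G23 L = 0"
        by auto
      have "critical_point (ell 3 4) G23 (1/2) L" unfolding critical_point_def using L(1) crit_iff[OF L(1)] h by simp
      then show "c \<in> critical_values (ell 3 4) G23 (1/2)" unfolding critical_values_def using L(2) by blast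
    qed
  qed
  have P2: "\<forall>c \<in> (\<lambda>L. (ell 3 4 L, G23 L)) ` Mh (1/2).
           snd c = 1 - (fst c)^2 \<and> c \<notin> {(1, 0), (-1, 0), (0, 1)} \<longrightarrow>
           codim1_elliptic_value (ell 3 4) G23 (1/2) c"
  proof (intro ballI impI)
    fix c assume cI: "c \<in> (\<lambda>L. (ell 3 4 L, G23 L)) ` Mh (1/2)" and h: "snd c = 1 - (fst c)^2 \<and> c \<notin> {(1, 0), (-1, 0), (0, 1)}"
    have cv: "c \<in> critical_values (ell 3 4) G23 (1/2)" using P1 cI h by auto
    show "codim1_elliptic_value (ell 3 4) G23 (1/2) c" unfolding codim1_elliptic_value_def
    proof (rule conjI[OF cv], intro ballI impI)
      fix L assume L1: "L \<in> Mh (1/2)" and L2: "(ell 3 4 L, G23 L) = c"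
      have G: "G23 L = 1 - (ell 3 4 L)^2" using h L2 by auto
      have t0: "ell 3 4 L \<noteq> 0" using h L2 G by auto
      have g0: "G23 L \<noteq> 0"
      proof
        assume "G23 L = 0"
        then have "(ell 3 4 L)^2 = 1" using G by simp
        then have "ell 3 4 L = 1 \<or> ell 3 4 L = -1" using power2_eq_1_iff by blast
        then show False using h L2 \<open>G23 L = 0\<close> by auto
      qed
      have cp: "critical_point (ell 3 4) G23 (1/2) L" unfolding critical_point_def using L1 crit_iff[OF L1] G by simp
      show "critical_point (ell 3 4) G23 (1/2) L \<and> dmom_rank (ell 3 4) G23 L = 1 \<and> elliptic_transverse (ell 3 4) G23 L"
        using cp C1_point[OF L1 G t0 g0] by simp
    qed
  qed
  have P3: "\<forall>c \<in> (\<lambda>L. (ell 3 4 L, G23 L)) ` Mh (1/2).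
           snd c = 0 \<and> c \<notin> {(1, 0), (-1, 0)} \<longrightarrow>
           codim1_elliptic_value (ell 3 4) G23 (1/2) c"
  proof (intro ballI impI)
    fix c assume cI: "c \<in> (\<lambda>L. (ell 3 4 L, G23 L)) ` Mh (1/2)" and h: "snd c = 0 \<and> c \<notin> {(1, 0), (-1, 0)}"
    have cv: "c \<in> critical_values (ell 3 4) G23 (1/2)" using P1 cI h by auto
    show "codim1_elliptic_value (ell 3 4) G23 (1/2) c" unfolding codim1_elliptic_value_def
    proof (rule conjI[OF cv], intro ballI impI)
      fix L assume L1: "L \<in> Mh (1/2)" and L2: "(ell 3 4 L, G23 L) = c"
      have G: "G23 L = 0" using h L2 by auto
      have t1: "(ell 3 4 L)^2 \<noteq> 1"
      proof
        assume "(ell 3 4 L)^2 = 1"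
        then have "ell 3 4 L = 1 \<or> ell 3 4 L = -1" using power2_eq_1_iff by blast
        then show False using h L2 G by auto
      qed
      have cp: "critical_point (ell 3 4) G23 (1/2) L" unfolding critical_point_def using L1 crit_iff[OF L1] G by simp
      show "critical_point (ell 3 4) G23 (1/2) L \<and> dmom_rank (ell 3 4) G23 L = 1 \<and> elliptic_transverse (ell 3 4) G23 L"
        using cp C2_point[OF L1 G t1] by simp
    qed
  qed
  show ?thesis using P1 P2 P3 by blast
qed
end
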